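(* Let $\mu>0$, $\alpha>0$, $f(x)=xe^{-x}$, and let $\beta\in L^\infty_+(0,+\infty)$ satisfy $\int_0^{\infty}\beta(a)e^{-\mu a}\,da=1$. Assume $t\mapsto u(t,\cdot)\in L^1_+(0,\infty)$, $t\in\mathbb R$, is a complete orbit of the semiflow generated by $\partial_tu+\partial_au=-\mu u$, $u(t,0)=\alpha f(\int_0^\infty\beta(a)u(t,a)\,da)$. Then there is a function $b$ such that $u(t,a)=e^{-\mu a}b(t-a)$ for almost every $a\ge0$ and all $t\in\mathbb R$, and $b$ satisfies the renewal equation $$b(t)=\alpha f\Big(\int_0^\infty\beta(a)e^{-\mu a}b(t-a)\,da\Big),\quad\forall t\in\mathbb R.$$ Moreover, if in addition $\gamma_-\le\int_0^{a^\star}u(t,a)\,da\le\gamma_+$ for all $t\in\mathbb R$, for some $\gamma_+>\gamma_->0$, where $a^\star=\sup\{a>0:\int_a^\infty\beta(\sigma)e^{-\mu\sigma}\,d\sigma>0\}$, then there exist $\delta^+\ge\delta^->0$ such that $\delta^-\le\int_0^\infty\beta(a)u(t,a)\,da\le\delta^+$ for all $t\in\mathbb R$.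
   Context: A complete orbit is a map $t\mapsto u(t,\cdot)$ defined for all $t\in\mathbb R$ with $U(s)u(t,\cdot)=u(t+s,\cdot)$ for all $t\in\mathbb R$, $s\ge0$, where $U$ is the semiflow: $U(s)u_0(a)=e^{-\mu s}u_0(a-s)$ for $a\ge s$ and $e^{-\mu a}b(s-a)$ for $a\le s$, with $b$ the continuous solution of $b(s)=\alpha f\big(\int_s^\infty\beta(a)e^{-\mu s}u_0(a-s)\,da+\int_0^s\beta(a)e^{-\mu a}b(s-a)\,da\big)$. *)

theory Defs
  imports "HOL-Analysis.Analysis"
begin

definition ricker :: "real \<Rightarrow> real" where
  "ricker x = x * exp (- x)"

text \<open>Elements of L^1_+(0,\<infinity>), represented by functions (equality only a.e. matters).\<close>
definition L1_plus :: "(real \<Rightarrow> real) \<Rightarrow> bool" where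
  "L1_plus v \<longleftrightarrow> set_integrable lborel {0..} v \<and> (AE a in lborel. 0 \<le> a \<longrightarrow> 0 \<le> v a)"

text \<open>\<open>semiflow_step \<mu> \<alpha> \<beta> u0 s v\<close>: v = U(s) u0 (a.e. on [0,\<infinity>)), where b is the
  continuous solution on [0,s] of the boundary fixed-point equation.\<close>
definition semiflow_step ::
  "real \<Rightarrow> real \<Rightarrow> (real \<Rightarrow> real) \<Rightarrow> (real \<Rightarrow> real) \<Rightarrow> real \<Rightarrow> (real \<Rightarrow> real) \<Rightarrow> bool" where
  "semiflow_step \<mu> \<alpha> \<beta> u0 s v \<longleftrightarrow>
     (\<exists>b :: real \<Rightarrow> real. continuous_on {0..s} b \<and>
        (\<forall>\<tau>\<in>{0..s}. b \<tau> = \<alpha> * ricker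
            ((LINT a:{\<tau>..}|lborel. \<beta> a * exp (- \<mu> * \<tau>) * u0 (a - \<tau>))
             + (LINT a:{0..\<tau>}|lborel. \<beta> a * exp (- \<mu> * a) * b (\<tau> - a)))) \<and>
        (AE a in lborel. 0 \<le> a \<longrightarrow>
            v a = (if s \<le> a then exp (- \<mu> * s) * u0 (a - s) else exp (- \<mu> * a) * b (s - a))))"

definition complete_orbit ::
  "real \<Rightarrow> real \<Rightarrow> (real \<Rightarrow> real) \<Rightarrow> (real \<Rightarrow> real \<Rightarrow> real) \<Rightarrow> bool" where
  "complete_orbit \<mu> \<alpha> \<beta> u \<longleftrightarrow>
     (\<forall>t. L1_plus (u t)) \<and> (\<forall>t s. 0 \<le> s \<longrightarrow> semiflow_step \<mu> \<alpha> \<beta> (u t) s (u (t + s)))"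

definition a_star :: "real \<Rightarrow> (real \<Rightarrow> real) \<Rightarrow> ereal" where
  "a_star \<mu> \<beta> = Sup (ereal ` {a. 0 < a \<and> (LINT \<sigma>:{a..}|lborel. \<beta> \<sigma> * exp (- \<mu> * \<sigma>)) > 0})"

end

theory Submission
  imports Defs
begin

lemma AE_affine_any:
  fixes c t :: real
  assumes c: "c \<noteq> 0" and P: "AE x in lborel. P x"
  shows "AE x in lborel. P (t + c * x)"
proof -
  from P obtain N where N: "{x \<in> space lborel. \<not> P x} \<subseteq> N" "emeasure lborel N = 0" "N \<in> sets lborel"
    by (auto elim!: AE_E)
  have "AE x in lborel. x \<notin> N" using N by (intro AE_not_in) auto
  then have "AE x in lborel. t + c * x \<notin> N"
    using AE_borel_affine[OF c, where t=t and P="\<lambda>x. x \<notin> N"] N by auto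
  then show ?thesis by eventually_elim (use N in auto)
qed

lemma cont_ae_eq:
  fixes f g :: "real \<Rightarrow> real"
  assumes pq: "p < q" and f: "continuous_on {p..q} f" and g: "continuous_on {p..q} g"
    and ae: "AE y in lborel. p < y \<and> y < q \<longrightarrow> f y = g y"
  shows "\<forall>y\<in>{p..q}. f y = g y"
proof -
  define D where "D = (\<lambda>y. f y - g y) -` (-{0}) \<inter> {p<..<q}"
  have co: "continuous_on {p<..<q} (\<lambda>y. f y - g y)"
    by (rule continuous_on_subset[of "{p..q}"]) (auto intro!: continuous_intros f g)
  have oD: "open D" unfolding D_def
    using continuous_on_open_vimage[of "{p<..<q}" "\<lambda>y. f y - g y"] co open_Compl[of "{0::real}"] by auto
  from ae obtain N where N: "{x \<in> space lborel. \<not> (p < x \<and> x < q \<longrightarrow> f x = g x)} \<subseteq> N" "emeasure lborel N = 0" "N \<in> sets lborel"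
    by (auto elim!: AE_E)
  have DN: "D \<subseteq> N" using N(1) by (auto simp: D_def)
  have "D = {}"
  proof (rule ccontr)
    assume "D \<noteq> {}"
    then obtain y where y: "y \<in> D" by auto
    with oD obtain r where r: "r > 0" "ball y r \<subseteq> D" by (auto simp: open_contains_ball)
    have "{y - r/2..y + r/2} \<subseteq> ball y r" using r by (auto simp: dist_real_def)
    then have sub: "{y - r/2..y + r/2} \<subseteq> N" using r DN by auto
    have "emeasure lborel {y - r/2..y + r/2} \<le> emeasure lborel N"
      by (rule emeasure_mono[OF sub N(3)])
    then show False using r N(2) by simp
  qed
  then have eq: "\<And>y. y \<in> {p<..<q} \<Longrightarrow> f y - g y = 0" by (auto simp: D_def)
  have cl: "closure {p<..<q} = {p..q}" using pq by simp
  have co2: "continuous_on (closure {p<..<q}) (\<lambda>y. f y - g y)"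
    unfolding cl by (auto intro!: continuous_intros f g)
  show ?thesis
  proof
    fix y assume "y \<in> {p..q}"
    then have "y \<in> closure {p<..<q}" using cl by simp
    from continuous_constant_on_closure[OF co2 eq this] show "f y = g y" by simp
  qed
qed



locale orb =
  fixes \<mu> \<alpha> :: real and \<beta> :: "real \<Rightarrow> real" and u :: "real \<Rightarrow> real \<Rightarrow> real"
  assumes mu_pos: "0 < \<mu>" and alpha_pos: "0 < \<alpha>"
    and beta_meas: "set_borel_measurable lborel {0..} \<beta>"
    and beta_Linf: "\<exists>M. AE a in lborel. 0 \<le> a \<longrightarrow> 0 \<le> \<beta> a \<and> \<beta> a \<le> M"
    and beta_norm: "(LINT a:{0..}|lborel. \<beta> a * exp (- \<mu> * a)) = 1"
    and orbit: "complete_orbit \<mu> \<alpha> \<beta> u"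
begin

definition bb :: "real \<Rightarrow> real" where
  "bb y = \<alpha> * ricker (LINT a:{0..}|lborel. \<beta> a * u y a)"

definition Mb :: real where "Mb = (SOME M. AE a in lborel. 0 \<le> a \<longrightarrow> 0 \<le> \<beta> a \<and> \<beta> a \<le> M)"

lemma Mb: "AE a in lborel. 0 \<le> a \<longrightarrow> 0 \<le> \<beta> a \<and> \<beta> a \<le> Mb"
  unfolding Mb_def using beta_Linf by (rule someI_ex)

lemma beta_meas': "(\<lambda>x. indicator {0..} x * \<beta> x) \<in> borel_measurable borel"
  using beta_meas unfolding set_borel_measurable_def by simp

lemma uL1: "set_integrable lborel {0..} (u t)"
  using orbit unfolding complete_orbit_def L1_plus_def by auto

lemma u_nonneg: "AE a in lborel. 0 \<le> a \<longrightarrow> 0 \<le> u t a"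
  using orbit unfolding complete_orbit_def L1_plus_def by auto

lemma u_meas: "(\<lambda>x. indicator {0..} x * u t x) \<in> borel_measurable borel"
  using uL1[of t] unfolding set_integrable_def by (auto dest: borel_measurable_integrable)

lemma step:
  assumes "0 \<le> s"
  obtains c where "continuous_on {0..s} c"
    "\<forall>\<tau>\<in>{0..s}. c \<tau> = \<alpha> * ricker
            ((LINT a:{\<tau>..}|lborel. \<beta> a * exp (- \<mu> * \<tau>) * u t (a - \<tau>))
             + (LINT a:{0..\<tau>}|lborel. \<beta> a * exp (- \<mu> * a) * c (\<tau> - a)))"
    "AE a in lborel. 0 \<le> a \<longrightarrow>
            u (t + s) a = (if s \<le> a then exp (- \<mu> * s) * u t (a - s) else exp (- \<mu> * a) * c (s - a))"
  using orbit assms unfolding complete_orbit_def semiflow_step_def by blast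

lemma integrable_beta_cont:
  assumes "continuous_on {0..\<tau>} h" and S: "S \<in> sets borel" "S \<subseteq> {0..\<tau>}"
  shows "set_integrable lborel S (\<lambda>a. \<beta> a * h a)"
proof -
  have "compact (h ` {0..\<tau>})" by (rule compact_continuous_image[OF assms(1)]) simp
  then obtain C where C: "\<And>a. a \<in> {0..\<tau>} \<Longrightarrow> norm (h a) \<le> C"
    using compact_imp_bounded bounded_iff by (metis image_eqI)
  have m1: "(\<lambda>a. indicator S a *\<^sub>R h a) \<in> borel_measurable borel"
    by (rule borel_measurable_continuous_on_indicator) (use S in \<open>auto intro: continuous_on_subset[OF assms(1)]\<close>)
  have meas: "(\<lambda>a. indicator S a *\<^sub>R (\<beta> a * h a)) \<in> borel_measurable lborel"
  proof -
    have "(\<lambda>a. indicator S a *\<^sub>R (\<beta> a * h a)) = (\<lambda>a. (indicator {0..} a * \<beta> a) * (indicator S a *\<^sub>R h a))"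
      using S by (auto simp: indicator_def fun_eq_iff)
    then show ?thesis using m1 beta_meas' by simp
  qed
  have int: "integrable lborel (\<lambda>a. indicator {0..\<tau>} a * (\<bar>Mb\<bar> * \<bar>C\<bar>))"
    by (intro integrable_mult_left integrable_real_indicator) (auto simp: emeasure_lborel_Icc_eq)
  show ?thesis unfolding set_integrable_def
  proof (rule Bochner_Integration.integrable_bound[OF int meas])
    show "AE x in lborel. norm (indicator S x *\<^sub>R (\<beta> x * h x)) \<le> norm (indicator {0..\<tau>} x * (\<bar>Mb\<bar> * \<bar>C\<bar>))"
      using Mb
    proof eventually_elim
      case (elim x)
      show ?case
      proof (cases "x \<in> S")
        case True
        then have "\<bar>\<beta> x\<bar> \<le> \<bar>Mb\<bar>" "\<bar>h x\<bar> \<le> \<bar>C\<bar>" using elim C[of x] S by auto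
        then show ?thesis using True S by (auto simp: abs_mult mult_mono')
      qed simp
    qed
  qed
qed

lemma integrable_beta_u_shift:
  assumes "0 \<le> \<tau>"
  shows "set_integrable lborel {\<tau>..} (\<lambda>a. \<beta> a * K * u t (a - \<tau>))"
proof -
  have i0: "integrable lborel (\<lambda>x. indicator {0..} x * u t x)"
    using uL1[of t] by (simp add: set_integrable_def)
  have i1: "integrable lborel (\<lambda>x. indicator {0..} (-\<tau> + 1 * x) * u t (-\<tau> + 1 * x))"
    using i0 lborel_integrable_real_affine_iff[of 1 "\<lambda>x. indicator {0..} x * u t x" "-\<tau>"] by simp
  have i2: "integrable lborel (\<lambda>x. \<bar>Mb * K\<bar> * \<bar>indicator {0..} (-\<tau> + 1 * x) * u t (-\<tau> + 1 * x)\<bar>)"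
    by (intro integrable_mult_right integrable_abs i1)
  have meas: "(\<lambda>a. indicator {\<tau>..} a *\<^sub>R (\<beta> a * K * u t (a - \<tau>))) \<in> borel_measurable lborel"
  proof -
    have "(\<lambda>a. indicator {\<tau>..} a *\<^sub>R (\<beta> a * K * u t (a - \<tau>))) =
       (\<lambda>a. indicator {\<tau>..} a * (indicator {0..} a * \<beta> a) * K * (indicator {0..} (a - \<tau>) * u t (a - \<tau>)))"
      using assms by (auto simp: indicator_def fun_eq_iff)
    moreover have "(\<lambda>a. indicator {0..} (a - \<tau>) * u t (a - \<tau>)) \<in> borel_measurable borel"
      using measurable_compose[OF _ u_meas[of t], of "\<lambda>a. a - \<tau>"] by simp
    ultimately show ?thesis using beta_meas' by simp
  qed
  show ?thesis unfolding set_integrable_def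
  proof (rule Bochner_Integration.integrable_bound[OF i2 meas])
    show "AE x in lborel. norm (indicator {\<tau>..} x *\<^sub>R (\<beta> x * K * u t (x - \<tau>))) \<le>
      norm (\<bar>Mb * K\<bar> * \<bar>indicator {0..} (-\<tau> + 1 * x) * u t (-\<tau> + 1 * x)\<bar>)"
      using Mb
    proof eventually_elim
      case (elim x)
      show ?case
      proof (cases "x \<in> {\<tau>..}")
        case True
        then have "\<bar>\<beta> x\<bar> \<le> \<bar>Mb\<bar>" using elim assms by auto
        then show ?thesis using True assms
          by (simp add: abs_mult mult.commute mult.left_commute) (intro mult_left_mono mult_right_mono, auto)
      qed simp
    qed
  qed
qed

lemma set_meas_of_int: "set_integrable lborel S f \<Longrightarrow> set_borel_measurable lborel S f"
  unfolding set_integrable_def set_borel_measurable_def by (rule borel_measurable_integrable)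

lemma stepA:
  assumes tau: "0 \<le> \<tau>" and cc: "continuous_on {0..\<tau>} c"
    and ceq: "c \<tau> = \<alpha> * ricker ((LINT a:{\<tau>..}|lborel. \<beta> a * exp (- \<mu> * \<tau>) * u t (a - \<tau>))
             + (LINT a:{0..\<tau>}|lborel. \<beta> a * exp (- \<mu> * a) * c (\<tau> - a)))"
    and ae: "AE a in lborel. 0 \<le> a \<longrightarrow>
            u (t + \<tau>) a = (if \<tau> \<le> a then exp (- \<mu> * \<tau>) * u t (a - \<tau>) else exp (- \<mu> * a) * c (\<tau> - a))"
  shows "c \<tau> = bb (t + \<tau>)"
proof -
  define f1 where "f1 = (\<lambda>a. \<beta> a * exp (- \<mu> * \<tau>) * u t (a - \<tau>))"
  define f2 where "f2 = (\<lambda>a. \<beta> a * exp (- \<mu> * a) * c (\<tau> - a))"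
  have i1: "set_integrable lborel {\<tau>..} f1" unfolding f1_def by (rule integrable_beta_u_shift[OF tau])
  have ch: "continuous_on {0..\<tau>} (\<lambda>a. exp (- \<mu> * a) * c (\<tau> - a))"
    by (intro continuous_intros continuous_on_compose2[OF cc]) auto
  have i2: "set_integrable lborel {0..<\<tau>} f2"
    using integrable_beta_cont[OF ch, of "{0..<\<tau>}", OF _ atLeastLessThan_subseteq_atLeastAtMost_iff[THEN iffD2]] unfolding f2_def by (auto simp add: mult.assoc)
  have i2': "set_integrable lborel {0..\<tau>} f2"
    using integrable_beta_cont[OF ch, of "{0..\<tau>}"] unfolding f2_def by (simp add: mult.assoc)
  have I2: "(LINT a:{0..\<tau>}|lborel. f2 a) = (LINT a:{0..<\<tau>}|lborel. f2 a)"
    by (rule set_integral_cong_set[OF set_meas_of_int[OF i2] set_meas_of_int[OF i2']])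
       (use AE_lborel_singleton[of \<tau>] in \<open>eventually_elim, auto\<close>)
  have mL: "(\<lambda>a. indicator {0..} a *\<^sub>R (\<beta> a * u (t + \<tau>) a)) \<in> borel_measurable lborel"
  proof -
    have "(\<lambda>a. indicator {0..} a *\<^sub>R (\<beta> a * u (t + \<tau>) a)) = (\<lambda>a. (indicator {0..} a * \<beta> a) * (indicator {0..} a * u (t + \<tau>) a))"
      by (auto simp: indicator_def fun_eq_iff)
    then show ?thesis using beta_meas' u_meas[of "t + \<tau>"] by simp
  qed
  have iR: "integrable lborel (\<lambda>a. indicator {\<tau>..} a *\<^sub>R f1 a + indicator {0..<\<tau>} a *\<^sub>R f2 a)"
    using i1 i2 unfolding set_integrable_def by auto
  have "(LINT a:{0..}|lborel. \<beta> a * u (t + \<tau>) a) = integral\<^sup>L lborel (\<lambda>a. indicator {\<tau>..} a *\<^sub>R f1 a + indicator {0..<\<tau>} a *\<^sub>R f2 a)"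
    unfolding set_lebesgue_integral_def
  proof (rule integral_cong_AE[OF mL borel_measurable_integrable[OF iR]])
    show "AE x in lborel. indicator {0..} x *\<^sub>R (\<beta> x * u (t + \<tau>) x) = indicator {\<tau>..} x *\<^sub>R f1 x + indicator {0..<\<tau>} x *\<^sub>R f2 x"
      using ae by eventually_elim (use tau in \<open>auto simp: indicator_def f1_def f2_def\<close>)
  qed
  also have "\<dots> = (LINT a:{\<tau>..}|lborel. f1 a) + (LINT a:{0..<\<tau>}|lborel. f2 a)"
    using i1 i2 unfolding set_integrable_def set_lebesgue_integral_def by (rule Bochner_Integration.integral_add)
  finally show ?thesis using ceq I2 unfolding bb_def f1_def f2_def by simp
qed

lemma stepB:
  assumes tau: "0 < \<tau>" "\<tau> \<le> s"
    and cc: "continuous_on {0..s} c"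
    and cae: "AE a in lborel. 0 \<le> a \<longrightarrow>
            u (t + s) a = (if s \<le> a then exp (- \<mu> * s) * u t (a - s) else exp (- \<mu> * a) * c (s - a))"
    and cc': "continuous_on {0..\<tau>} c'"
    and cae': "AE a in lborel. 0 \<le> a \<longrightarrow>
            u (t + \<tau>) a = (if \<tau> \<le> a then exp (- \<mu> * \<tau>) * u t (a - \<tau>) else exp (- \<mu> * a) * c' (\<tau> - a))"
  shows "\<forall>y\<in>{0..\<tau>}. c y = c' y"
proof -
  define d where "d = s - \<tau>"
  have d: "0 \<le> d" "s = \<tau> + d" using tau by (auto simp: d_def)
  obtain c'' where "AE a in lborel. 0 \<le> a \<longrightarrow>
            u ((t + \<tau>) + d) a = (if d \<le> a then exp (- \<mu> * d) * u (t + \<tau>) (a - d) else exp (- \<mu> * a) * c'' (d - a))"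
    using step[OF d(1), of "t + \<tau>"] by blast
  then have h1: "AE a in lborel. 0 \<le> a \<longrightarrow>
            u (t + s) a = (if d \<le> a then exp (- \<mu> * d) * u (t + \<tau>) (a - d) else exp (- \<mu> * a) * c'' (d - a))"
    using d by (simp add: add.assoc)
  have h2: "AE a in lborel. 0 \<le> (- d + 1 * a) \<longrightarrow>
            u (t + \<tau>) (- d + 1 * a) = (if \<tau> \<le> (- d + 1 * a) then exp (- \<mu> * \<tau>) * u t ((- d + 1 * a) - \<tau>) else exp (- \<mu> * (- d + 1 * a)) * c' (\<tau> - (- d + 1 * a)))"
    by (rule AE_affine_any[OF one_neq_zero cae'])
  have h3: "AE a in lborel. d < a \<and> a < s \<longrightarrow> c (s - a) = c' (s - a)"
    using h1 h2 cae
  proof eventually_elim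
    case (elim a)
    show ?case
    proof
      assume a: "d < a \<and> a < s"
      have e1: "- d + 1 * a = a - d" by simp
      have A: "u (t + s) a = exp (- \<mu> * d) * u (t + \<tau>) (a - d)" using elim(1) a d by auto
      have B: "u (t + \<tau>) (a - d) = exp (- \<mu> * (a - d)) * c' (s - a)"
        using elim(2) a d unfolding e1 by (auto simp: algebra_simps)
      have C: "u (t + s) a = exp (- \<mu> * a) * c (s - a)" using elim(3) a d by auto
      have "exp (- \<mu> * a) * c (s - a) = exp (- \<mu> * a) * c' (s - a)"
      proof -
        have E: "exp (- \<mu> * d) * exp (- \<mu> * (a - d)) = exp (- \<mu> * a)"
          by (subst exp_add[symmetric]) (simp add: algebra_simps)
        have "exp (- \<mu> * a) * c (s - a) = exp (- \<mu> * d) * (exp (- \<mu> * (a - d)) * c' (s - a))"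
          using A B C by simp
        also have "\<dots> = exp (- \<mu> * a) * c' (s - a)" using E by (simp only: mult.assoc[symmetric])
        finally show ?thesis .
      qed
      then show "c (s - a) = c' (s - a)" by simp
    qed
  qed
  have h4: "AE y in lborel. 0 < y \<and> y < \<tau> \<longrightarrow> c y = c' y"
  proof -
    have "AE y in lborel. d < s + (-1) * y \<and> s + (-1) * y < s \<longrightarrow> c (s - (s + (-1) * y)) = c' (s - (s + (-1) * y))"
      by (rule AE_affine_any[OF _ h3]) simp
    then show ?thesis by eventually_elim (auto simp: d_def)
  qed
  show ?thesis
    by (rule cont_ae_eq[OF tau(1) continuous_on_subset[OF cc] cc' h4]) (use tau in auto)
qed

lemma LINT_point0: "(LINT a:{0::real}|lborel. (f a :: real)) = 0"
proof -
  have "(\<lambda>x. indicator {0::real} x *\<^sub>R f x) = (\<lambda>x. f 0 * indicator {0::real} x)"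
    by (auto simp: indicator_def fun_eq_iff)
  moreover have "integral\<^sup>L lborel (indicator {0::real}) = (0::real)"
    by (simp add: measure_def)
  ultimately show ?thesis by (simp add: set_lebesgue_integral_def)
qed

lemma stepC:
  assumes s: "0 \<le> s" and cc: "continuous_on {0..s} c"
    and ceq: "\<forall>\<tau>\<in>{0..s}. c \<tau> = \<alpha> * ricker
            ((LINT a:{\<tau>..}|lborel. \<beta> a * exp (- \<mu> * \<tau>) * u t (a - \<tau>))
             + (LINT a:{0..\<tau>}|lborel. \<beta> a * exp (- \<mu> * a) * c (\<tau> - a)))"
    and cae: "AE a in lborel. 0 \<le> a \<longrightarrow>
            u (t + s) a = (if s \<le> a then exp (- \<mu> * s) * u t (a - s) else exp (- \<mu> * a) * c (s - a))"
  shows "\<forall>y\<in>{0..s}. c y = bb (t + y)"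
proof
  fix y assume y: "y \<in> {0..s}"
  show "c y = bb (t + y)"
  proof (cases "y = 0")
    case True
    obtain c0 where c0: "continuous_on {0..0} c0"
      "\<forall>\<tau>\<in>{0..0}. c0 \<tau> = \<alpha> * ricker
            ((LINT a:{\<tau>..}|lborel. \<beta> a * exp (- \<mu> * \<tau>) * u t (a - \<tau>))
             + (LINT a:{0..\<tau>}|lborel. \<beta> a * exp (- \<mu> * a) * c0 (\<tau> - a)))"
      "AE a in lborel. 0 \<le> a \<longrightarrow>
            u (t + 0) a = (if 0 \<le> a then exp (- \<mu> * 0) * u t (a - 0) else exp (- \<mu> * a) * c0 (0 - a))"
      using step[OF order_refl, of t] by blast
    have "c0 0 = bb (t + 0)"
      by (rule stepA[OF order_refl c0(1) _ c0(3)]) (use c0(2) in simp)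
    moreover have "c 0 = c0 0" using ceq c0(2) s by (simp add: LINT_point0)
    ultimately show ?thesis using True by simp
  next
    case False
    then have y0: "0 < y" "y \<le> s" using y by auto
    obtain c' where c': "continuous_on {0..y} c'"
      "\<forall>\<tau>\<in>{0..y}. c' \<tau> = \<alpha> * ricker
            ((LINT a:{\<tau>..}|lborel. \<beta> a * exp (- \<mu> * \<tau>) * u t (a - \<tau>))
             + (LINT a:{0..\<tau>}|lborel. \<beta> a * exp (- \<mu> * a) * c' (\<tau> - a)))"
      "AE a in lborel. 0 \<le> a \<longrightarrow>
            u (t + y) a = (if y \<le> a then exp (- \<mu> * y) * u t (a - y) else exp (- \<mu> * a) * c' (y - a))"
      using step[OF less_imp_le[OF y0(1)], of t] by blast
    have "c' y = bb (t + y)"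
      by (rule stepA[OF _ c'(1) _ c'(3)]) (use c'(2) y0 in auto)
    moreover have "c y = c' y" using stepB[OF y0 cc cae c'(1) c'(3)] y0 by auto
    ultimately show ?thesis by simp
  qed
qed

lemma bb_isCont: "isCont bb z"
proof -
  have two: "(0::real) \<le> 2" by simp
  obtain c where c: "continuous_on {0..2} c"
      "\<forall>\<tau>\<in>{0..2}. c \<tau> = \<alpha> * ricker
            ((LINT a:{\<tau>..}|lborel. \<beta> a * exp (- \<mu> * \<tau>) * u (z - 1) (a - \<tau>))
             + (LINT a:{0..\<tau>}|lborel. \<beta> a * exp (- \<mu> * a) * c (\<tau> - a)))"
      "AE a in lborel. 0 \<le> a \<longrightarrow>
            u (z - 1 + 2) a = (if 2 \<le> a then exp (- \<mu> * 2) * u (z - 1) (a - 2) else exp (- \<mu> * a) * c (2 - a))"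
    using step[OF two, of "z - 1"] by blast
  have eq: "\<forall>y\<in>{0..2}. c y = bb (z - 1 + y)" by (rule stepC[OF _ c]) simp
  have "continuous_on {z - 1..z + 1} (\<lambda>w. c (w - (z - 1)))"
    by (rule continuous_on_compose2[OF c(1)]) (auto intro!: continuous_intros)
  then have "continuous_on {z - 1..z + 1} bb"
    by (rule continuous_on_eq) (use eq in \<open>auto\<close>)
  then show ?thesis
    by (rule continuous_on_interior) (simp add: interior_atLeastAtMost_real)
qed

lemma bb_cont: "continuous_on A bb"
  using bb_isCont by (simp add: continuous_at_imp_continuous_on)

lemma rep: "AE a in lborel. 0 \<le> a \<longrightarrow> u t a = exp (- \<mu> * a) * bb (t - a)"
proof -
  have H: "AE a in lborel. 0 \<le> a \<and> a < real (Suc n) \<longrightarrow> u t a = exp (- \<mu> * a) * bb (t - a)" for n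
  proof -
    define s where "s = real (Suc n)"
    have s: "0 \<le> s" by (simp add: s_def)
    obtain c where c: "continuous_on {0..s} c"
      "\<forall>\<tau>\<in>{0..s}. c \<tau> = \<alpha> * ricker
            ((LINT a:{\<tau>..}|lborel. \<beta> a * exp (- \<mu> * \<tau>) * u (t - s) (a - \<tau>))
             + (LINT a:{0..\<tau>}|lborel. \<beta> a * exp (- \<mu> * a) * c (\<tau> - a)))"
      "AE a in lborel. 0 \<le> a \<longrightarrow>
            u (t - s + s) a = (if s \<le> a then exp (- \<mu> * s) * u (t - s) (a - s) else exp (- \<mu> * a) * c (s - a))"
      using step[OF s, of "t - s"] by blast
    have eq: "\<forall>y\<in>{0..s}. c y = bb (t - s + y)" by (rule stepC[OF s c])
    show ?thesis using c(3)
    proof eventually_elim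
      case (elim a)
      show ?case
      proof
        assume a: "0 \<le> a \<and> a < real (Suc n)"
        then have "u t a = exp (- \<mu> * a) * c (s - a)" using elim by (auto simp: s_def)
        moreover have "c (s - a) = bb (t - a)" using eq[rule_format, of "s - a"] a by (auto simp: s_def)
        ultimately show "u t a = exp (- \<mu> * a) * bb (t - a)" by simp
      qed
    qed
  qed
  then have "AE a in lborel. \<forall>n. 0 \<le> a \<and> a < real (Suc n) \<longrightarrow> u t a = exp (- \<mu> * a) * bb (t - a)"
    by (subst AE_all_countable) (use H in blast)
  then show ?thesis
  proof eventually_elim
    case (elim a)
    show ?case
    proof
      assume "0 \<le> a"
      obtain n where "a < real n" using reals_Archimedean2 by blast
      then have "a < real (Suc n)" by simp
      then show "u t a = exp (- \<mu> * a) * bb (t - a)" using elim \<open>0 \<le> a\<close> by blast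
    qed
  qed
qed

end


lemma refl_emeasure:
  assumes [measurable]: "D \<in> sets borel"
  shows "emeasure lborel {a::real. s - a \<in> D} = emeasure lborel D"
proof -
  have "emeasure lborel D = (\<integral>\<^sup>+x. indicator D x \<partial>lborel)" by simp
  also have "\<dots> = ennreal \<bar>-1\<bar> * (\<integral>\<^sup>+x. indicator D (s + (-1) * x) \<partial>lborel)"
    by (rule nn_integral_real_affine) auto
  also have "(\<integral>\<^sup>+x. indicator D (s + (-1) * x) \<partial>lborel) = (\<integral>\<^sup>+x. indicator {a. s - a \<in> D} x \<partial>lborel)"
    by (simp add: indicator_def)
  also have "\<dots> = emeasure lborel {a. s - a \<in> D}"
    by (rule nn_integral_indicator) measurable
  finally show ?thesis by simp
qed

definition kern :: "(real \<Rightarrow> real) \<Rightarrow> real set \<Rightarrow> real \<Rightarrow> bool" where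
  "kern f A C \<longleftrightarrow> (\<forall>t. ennreal C * (\<integral>\<^sup>+a. indicator A a * ennreal (f (t - a)) \<partial>lborel) \<le> ennreal (f t))"

lemma kern_compose:
  assumes f[measurable]: "f \<in> borel_measurable borel"
    and A[measurable]: "A \<in> sets borel" and B[measurable]: "B \<in> sets borel" and W[measurable]: "W \<in> sets borel"
    and C: "0 \<le> C1" "0 \<le> C2" "0 \<le> c"
    and kA: "kern f A C1" and kB: "kern f B C2"
    and cov: "\<And>s. s \<in> W \<Longrightarrow> ennreal c \<le> emeasure lborel (A \<inter> {a. s - a \<in> B})"
  shows "kern f W (C1 * C2 * c)"
  unfolding kern_def
proof
  fix t
  define G where "G s = ennreal (f (t - s))" for s
  have [measurable]: "G \<in> borel_measurable borel" unfolding G_def by measurable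
  have "ennreal (C1 * C2 * c) * (\<integral>\<^sup>+s. indicator W s * G s \<partial>lborel)
      = ennreal (C1 * C2) * (\<integral>\<^sup>+s. ennreal c * (indicator W s * G s) \<partial>lborel)"
    using C by (subst nn_integral_cmult) (auto simp: ennreal_mult mult.assoc)
  also have "\<dots> \<le> ennreal (C1 * C2) * (\<integral>\<^sup>+s. emeasure lborel (A \<inter> {a. s - a \<in> B}) * G s \<partial>lborel)"
  proof (intro mult_left_mono nn_integral_mono)
    fix s
    show "ennreal c * (indicator W s * G s) \<le> emeasure lborel (A \<inter> {a. s - a \<in> B}) * G s"
      using cov[of s] by (cases "s \<in> W") (auto intro: mult_right_mono)
  qed simp
  also have "(\<integral>\<^sup>+s. emeasure lborel (A \<inter> {a. s - a \<in> B}) * G s \<partial>lborel)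
      = (\<integral>\<^sup>+s. (\<integral>\<^sup>+a. indicator A a * indicator B (s - a) * G s \<partial>lborel) \<partial>lborel)"
  proof (rule nn_integral_cong)
    fix s
    have "emeasure lborel (A \<inter> {a. s - a \<in> B}) = (\<integral>\<^sup>+a. indicator (A \<inter> {a. s - a \<in> B}) a \<partial>lborel)"
      by (rule nn_integral_indicator[symmetric]) measurable
    also have "\<dots> = (\<integral>\<^sup>+a. indicator A a * indicator B (s - a) \<partial>lborel)"
      by (rule nn_integral_cong) (simp add: indicator_def)
    finally show "emeasure lborel (A \<inter> {a. s - a \<in> B}) * G s = (\<integral>\<^sup>+a. indicator A a * indicator B (s - a) * G s \<partial>lborel)"
      by (simp add: nn_integral_multc)
  qed
  also have "\<dots> = (\<integral>\<^sup>+a. (\<integral>\<^sup>+s. indicator A a * indicator B (s - a) * G s \<partial>lborel) \<partial>lborel)"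
    by (rule lborel_pair.Fubini') measurable
  also have "\<dots> = (\<integral>\<^sup>+a. indicator A a * (\<integral>\<^sup>+b. indicator B b * ennreal (f ((t - a) - b)) \<partial>lborel) \<partial>lborel)"
  proof (rule nn_integral_cong)
    fix a
    have "(\<integral>\<^sup>+s. indicator A a * indicator B (s - a) * G s \<partial>lborel)
        = ennreal \<bar>1\<bar> * (\<integral>\<^sup>+b. indicator A a * indicator B ((a + 1 * b) - a) * G (a + 1 * b) \<partial>lborel)"
      by (rule nn_integral_real_affine) auto
    also have "\<dots> = (\<integral>\<^sup>+b. indicator A a * (indicator B b * ennreal (f ((t - a) - b))) \<partial>lborel)"
      by (simp add: G_def mult.assoc algebra_simps)
    also have "\<dots> = indicator A a * (\<integral>\<^sup>+b. indicator B b * ennreal (f ((t - a) - b)) \<partial>lborel)"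
      by (rule nn_integral_cmult) measurable
    finally show "(\<integral>\<^sup>+s. indicator A a * indicator B (s - a) * G s \<partial>lborel)
        = indicator A a * (\<integral>\<^sup>+b. indicator B b * ennreal (f ((t - a) - b)) \<partial>lborel)" .
  qed
  finally have 1: "ennreal (C1 * C2 * c) * (\<integral>\<^sup>+s. indicator W s * G s \<partial>lborel)
     \<le> ennreal (C1 * C2) * (\<integral>\<^sup>+a. indicator A a * (\<integral>\<^sup>+b. indicator B b * ennreal (f ((t - a) - b)) \<partial>lborel) \<partial>lborel)" .
  have "ennreal C2 * (\<integral>\<^sup>+a. indicator A a * (\<integral>\<^sup>+b. indicator B b * ennreal (f ((t - a) - b)) \<partial>lborel) \<partial>lborel)
     = (\<integral>\<^sup>+a. indicator A a * (ennreal C2 * (\<integral>\<^sup>+b. indicator B b * ennreal (f ((t - a) - b)) \<partial>lborel)) \<partial>lborel)"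
    by (subst nn_integral_cmult[symmetric]) (measurable, simp add: mult.left_commute)
  also have "\<dots> \<le> (\<integral>\<^sup>+a. indicator A a * ennreal (f (t - a)) \<partial>lborel)"
    using kB unfolding kern_def by (intro nn_integral_mono mult_left_mono) auto
  finally have 2: "ennreal C2 * (\<integral>\<^sup>+a. indicator A a * (\<integral>\<^sup>+b. indicator B b * ennreal (f ((t - a) - b)) \<partial>lborel) \<partial>lborel)
     \<le> (\<integral>\<^sup>+a. indicator A a * ennreal (f (t - a)) \<partial>lborel)" .
  have "ennreal (C1 * C2) * (\<integral>\<^sup>+a. indicator A a * (\<integral>\<^sup>+b. indicator B b * ennreal (f ((t - a) - b)) \<partial>lborel) \<partial>lborel)
     = ennreal C1 * (ennreal C2 * (\<integral>\<^sup>+a. indicator A a * (\<integral>\<^sup>+b. indicator B b * ennreal (f ((t - a) - b)) \<partial>lborel) \<partial>lborel))"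
    using C by (simp add: ennreal_mult mult.assoc)
  also have "\<dots> \<le> ennreal C1 * (\<integral>\<^sup>+a. indicator A a * ennreal (f (t - a)) \<partial>lborel)"
    by (rule mult_left_mono[OF 2]) simp
  also have "\<dots> \<le> ennreal (f t)" using kA unfolding kern_def by auto
  finally show "ennreal (C1 * C2 * c) * (\<integral>\<^sup>+a. indicator W a * ennreal (f (t - a)) \<partial>lborel) \<le> ennreal (f t)"
    using 1 unfolding G_def by simp
qed

lemma interval_cov:
  fixes w j l r :: real
  assumes r: "0 < r" "r \<le> l" and s: "s \<in> {w + j + r/4 .. w + j + l + 3*r/4}"
  shows "ennreal (r/4) \<le> emeasure lborel ({w..w+l} \<inter> {a. s - a \<in> {j..j+r}})"
proof (cases "s - j \<le> w + l")
  case True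
  have "{s - j - r/4 .. s - j} \<subseteq> {w..w+l} \<inter> {a. s - a \<in> {j..j+r}}"
    using True r s by auto
  then have "emeasure lborel {s - j - r/4 .. s - j} \<le> emeasure lborel ({w..w+l} \<inter> {a. s - a \<in> {j..j+r}})"
    by (rule emeasure_mono) measurable
  then show ?thesis using r by simp
next
  case False
  have "{w + l - r/4 .. w + l} \<subseteq> {w..w+l} \<inter> {a. s - a \<in> {j..j+r}}"
    using False r s by auto
  then have "emeasure lborel {w + l - r/4 .. w + l} \<le> emeasure lborel ({w..w+l} \<inter> {a. s - a \<in> {j..j+r}})"
    by (rule emeasure_mono) measurable
  then show ?thesis using r by simp
qed

lemma set_cov:
  fixes p h :: real
  assumes h: "0 < h" and F[measurable]: "F \<in> sets borel" and Fsub: "F \<subseteq> {p..p+h}"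
    and D: "emeasure lborel ({p..p+h} - F) \<le> ennreal (h/4)"
    and s: "s \<in> {2*p + 3*h/4 .. 2*p + 5*h/4}"
  shows "ennreal (h/4) \<le> emeasure lborel (F \<inter> {a. s - a \<in> F})"
proof -
  define \<delta> where "\<delta> = s - 2*p - h"
  have dl: "\<bar>\<delta>\<bar> \<le> h/4" using s by (auto simp: \<delta>_def abs_if)
  define Dset where "Dset = {p..p+h} - F"
  have [measurable]: "Dset \<in> sets borel" unfolding Dset_def by measurable
  define Q where "Q = {p + max 0 \<delta> .. p + h + min 0 \<delta>}"
  define X where "X = F \<inter> {a. s - a \<in> F}"
  have [measurable]: "X \<in> sets borel" unfolding X_def by measurable
  have Qsub: "Q \<subseteq> (X \<union> Dset) \<union> {a. s - a \<in> Dset}"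
  proof
    fix a assume a: "a \<in> Q"
    then have a1: "a \<in> {p..p+h}" "s - a \<in> {p..p+h}" using dl h unfolding Q_def \<delta>_def by auto
    show "a \<in> (X \<union> Dset) \<union> {a. s - a \<in> Dset}"
      using a1 unfolding X_def Dset_def by auto
  qed
  have "emeasure lborel Q \<le> emeasure lborel ((X \<union> Dset) \<union> {a. s - a \<in> Dset})"
    by (rule emeasure_mono[OF Qsub]) measurable
  also have "\<dots> \<le> emeasure lborel (X \<union> Dset) + emeasure lborel {a. s - a \<in> Dset}"
    by (rule emeasure_subadditive) measurable
  also have "\<dots> \<le> emeasure lborel X + emeasure lborel Dset + emeasure lborel {a. s - a \<in> Dset}"
    by (intro add_right_mono emeasure_subadditive) measurable
  also have "emeasure lborel {a. s - a \<in> Dset} = emeasure lborel Dset"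
    by (rule refl_emeasure) measurable
  also have "emeasure lborel X + emeasure lborel Dset + emeasure lborel Dset \<le> emeasure lborel X + ennreal (h/4) + ennreal (h/4)"
    using D unfolding Dset_def by (intro add_mono) auto
  finally have 1: "emeasure lborel Q \<le> emeasure lborel X + ennreal (h/4) + ennreal (h/4)" .
  have "emeasure lborel Q = ennreal (h - \<bar>\<delta>\<bar>)"
    unfolding Q_def using dl h by (auto simp: emeasure_lborel_Icc_eq max_def min_def)
  with 1 have 2: "ennreal (h - \<bar>\<delta>\<bar>) \<le> emeasure lborel X + ennreal (h/2)"
    using h by (simp add: add.assoc ennreal_plus[symmetric] del: ennreal_plus)
  show ?thesis
  proof (cases "emeasure lborel X")
    case (real x)
    then have "ennreal (h - \<bar>\<delta>\<bar>) \<le> ennreal (x + h/2)" using 2 h by (simp add: ennreal_plus)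
    then have "h - \<bar>\<delta>\<bar> \<le> x + h/2" using h real by (subst (asm) ennreal_le_iff) auto
    then show ?thesis using real dl unfolding X_def by (auto intro!: ennreal_leI)
  qed (simp add: X_def)
qed



lemma exp_tail:
  fixes m L :: real
  assumes m: "0 < m"
  shows "set_integrable lborel {L..} (\<lambda>a. exp (- m * a))"
    and "(LINT a:{L..}|lborel. exp (- m * a)) = exp (- m * L) / m"
proof -
  have hk: "((\<lambda>x. exp (- m * x)) has_integral exp (- m * L) / m) {L..}"
    using has_integral_exp_minus_to_infinity[OF m, of L] by simp
  have "(\<lambda>x. exp (- m * x)) absolutely_integrable_on {L..}"
    by (rule nonnegative_absolutely_integrable_1) (use hk in \<open>auto simp: integrable_on_def\<close>)
  then show si: "set_integrable lborel {L..} (\<lambda>a. exp (- m * a))"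
    unfolding set_integrable_def by (subst integrable_completion[symmetric]) auto
  show "(LINT a:{L..}|lborel. exp (- m * a)) = exp (- m * L) / m"
    using set_borel_integral_eq_integral(2)[OF si] hk by (simp add: integral_unique)
qed

context orb
begin

lemma bb_meas[measurable]: "bb \<in> borel_measurable borel"
  by (rule borel_measurable_continuous_onI[OF bb_cont])

lemma beta_u_int: "set_integrable lborel {0..} (\<lambda>a. \<beta> a * u t a)"
  using integrable_beta_u_shift[of 0 1 t] by simp

lemma gbb_meas: "(\<lambda>a. indicator {0..} a *\<^sub>R (\<beta> a * exp (- \<mu> * a) * bb (t - a))) \<in> borel_measurable lborel"
proof -
  have "(\<lambda>a. indicator {0..} a *\<^sub>R (\<beta> a * exp (- \<mu> * a) * bb (t - a))) = (\<lambda>a. (indicator {0..} a * \<beta> a) * (exp (- \<mu> * a) * bb (t - a)))"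
    by (auto simp: indicator_def fun_eq_iff)
  then show ?thesis using beta_meas' by simp
qed

lemma bu_meas: "(\<lambda>a. indicator {0..} a *\<^sub>R (\<beta> a * u t a)) \<in> borel_measurable lborel"
  using beta_u_int[of t] unfolding set_integrable_def by (rule borel_measurable_integrable)

lemma bu_ae: "AE a in lborel. indicator {0..} a *\<^sub>R (\<beta> a * u t a) = indicator {0..} a *\<^sub>R (\<beta> a * exp (- \<mu> * a) * bb (t - a))"
  using rep[of t] by eventually_elim (auto simp: indicator_def)

lemma gbb_int: "set_integrable lborel {0..} (\<lambda>a. \<beta> a * exp (- \<mu> * a) * bb (t - a))"
  using beta_u_int[of t] integrable_cong_AE[OF bu_meas gbb_meas bu_ae] unfolding set_integrable_def by simp

lemma X_eq: "(LINT a:{0..}|lborel. \<beta> a * u t a) = (LINT a:{0..}|lborel. \<beta> a * exp (- \<mu> * a) * bb (t - a))"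
  unfolding set_lebesgue_integral_def by (rule integral_cong_AE[OF bu_meas gbb_meas bu_ae])

lemma part1:
  "(\<forall>t. AE a in lborel. 0 \<le> a \<longrightarrow> u t a = exp (- \<mu> * a) * bb (t - a)) \<and>
   (\<forall>t. set_integrable lborel {0..} (\<lambda>a. \<beta> a * exp (- \<mu> * a) * bb (t - a)) \<and>
        bb t = \<alpha> * ricker (LINT a:{0..}|lborel. \<beta> a * exp (- \<mu> * a) * bb (t - a)))"
  using rep gbb_int X_eq unfolding bb_def[of t] by (metis bb_def)

definition X :: "real \<Rightarrow> real" where "X t = (LINT a:{0..}|lborel. \<beta> a * u t a)"

lemma bbX: "bb t = \<alpha> * ricker (X t)" unfolding bb_def X_def ..

lemma X_nonneg: "0 \<le> X t"
proof -
  have "AE a in lborel. 0 \<le> indicator {0..} a *\<^sub>R (\<beta> a * u t a)"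
    using Mb u_nonneg[of t] by eventually_elim (auto simp: indicator_def)
  then show ?thesis unfolding X_def set_lebesgue_integral_def by (rule integral_nonneg_AE)
qed

lemma g_int: "set_integrable lborel {0..} (\<lambda>a. \<beta> a * exp (- \<mu> * a))"
proof (rule ccontr)
  assume "\<not> ?thesis"
  then have "(LINT a:{0..}|lborel. \<beta> a * exp (- \<mu> * a)) = 0"
    unfolding set_integrable_def set_lebesgue_integral_def by (rule not_integrable_integral_eq)
  then show False using beta_norm by simp
qed

lemma ricker_le: "ricker x \<le> exp (-1)"
proof -
  have "x \<le> exp (x - 1)" using exp_ge_add_one_self[of "x - 1"] by simp
  then have "x * exp (- x) \<le> exp (x - 1) * exp (- x)" by (rule mult_right_mono) simp
  also have "\<dots> = exp (-1)" by (simp add: exp_add[symmetric])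
  finally show ?thesis unfolding ricker_def .
qed

lemma bb_nonneg: "0 \<le> bb t"
  unfolding bbX ricker_def using X_nonneg[of t] alpha_pos by simp

lemma bb_le: "bb t \<le> \<alpha> * exp (-1)"
  unfolding bbX using ricker_le alpha_pos by (simp add: mult_left_mono)

lemma X_le: "X t \<le> \<alpha> * exp (-1)"
proof -
  have "X t = (LINT a:{0..}|lborel. \<beta> a * exp (- \<mu> * a) * bb (t - a))" unfolding X_def by (rule X_eq)
  also have "\<dots> \<le> (LINT a:{0..}|lborel. \<beta> a * exp (- \<mu> * a) * (\<alpha> * exp (-1)))"
  proof (rule set_integral_mono_AE[OF gbb_int])
    show "set_integrable lborel {0..} (\<lambda>a. \<beta> a * exp (- \<mu> * a) * (\<alpha> * exp (-1)))"
      using g_int by (rule set_integrable_mult_left)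
    show "AE x\<in>{0..} in lborel. \<beta> x * exp (- \<mu> * x) * bb (t - x) \<le> \<beta> x * exp (- \<mu> * x) * (\<alpha> * exp (- 1))"
      using Mb by eventually_elim (auto intro!: mult_left_mono bb_le)
  qed
  also have "\<dots> = \<alpha> * exp (-1)" using beta_norm by simp
  finally show ?thesis .
qed

definition kk :: real where "kk = \<alpha> * exp (- (\<alpha> * exp (-1)))"

lemma kk_pos: "0 < kk" unfolding kk_def using alpha_pos by simp

lemma bb_ge: "kk * X t \<le> bb t"
proof -
  have "exp (- (\<alpha> * exp (-1))) \<le> exp (- X t)" using X_le[of t] by simp
  then have "X t * exp (- (\<alpha> * exp (-1))) \<le> X t * exp (- X t)"
    by (rule mult_left_mono) (rule X_nonneg)
  then have H: "\<alpha> * (X t * exp (- (\<alpha> * exp (-1)))) \<le> \<alpha> * (X t * exp (- X t))"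
    by (rule mult_left_mono) (use alpha_pos in simp)
  have eq: "kk * X t = \<alpha> * (X t * exp (- (\<alpha> * exp (-1))))" unfolding kk_def by (simp add: algebra_simps)
  show ?thesis unfolding bbX ricker_def eq by (rule H)
qed

lemma bb_le_X: "bb t \<le> \<alpha> * X t"
proof -
  have "X t * exp (- X t) \<le> X t * 1" using X_nonneg[of t] by (intro mult_left_mono) auto
  then show ?thesis unfolding bbX ricker_def using alpha_pos by (simp add: mult_left_mono)
qed

end


lemma density_piece:
  fixes G :: "real \<Rightarrow> real"
  assumes Gm[measurable]: "G \<in> borel_measurable borel" and nz: "\<not> (AE a in lborel. G a \<le> 0)"
  shows "\<exists>c p h F. 0 < c \<and> 0 < h \<and> F \<in> sets borel \<and> F \<subseteq> {p..p+h} \<and> (\<forall>a\<in>F. c \<le> G a)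
           \<and> emeasure lborel ({p..p+h} - F) \<le> ennreal (h/4)"
proof -
  define E where "E n = {a. inverse (real (Suc n)) \<le> G a}" for n
  have Em[measurable]: "E n \<in> sets borel" for n unfolding E_def by measurable
  have "\<exists>n. E n \<notin> null_sets lborel"
  proof (rule ccontr)
    assume "\<not> ?thesis"
    then have "\<forall>n. AE a in lborel. a \<notin> E n" by (auto intro: AE_not_in)
    then have "AE a in lborel. \<forall>n. a \<notin> E n" by (subst AE_all_countable) auto
    then have "AE a in lborel. G a \<le> 0"
    proof eventually_elim
      case (elim a)
      show ?case
      proof (rule ccontr)
        assume "\<not> G a \<le> 0"
        then obtain n where "n > 0" "inverse (real n) < G a" using ex_inverse_of_nat_less[of "G a"] by auto
        then have "a \<in> E (n - 1)" unfolding E_def by auto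
        with elim show False by blast
      qed
    qed
    with nz show False by blast
  qed
  then obtain n where nE: "E n \<notin> null_sets lborel" by blast
  define c where "c = inverse (real (Suc n))"
  have c: "0 < c" unfolding c_def by simp
  let ?f = "indicator (E n) :: real \<Rightarrow> real"
  have fint: "?f integrable_on cbox a b" for a b
  proof -
    have "E n \<inter> cbox a b \<in> lmeasurable"
      by (rule bounded_set_imp_lmeasurable) (auto intro: bounded_Int)
    then show ?thesis by (simp add: integrable_on_indicator)
  qed
  obtain N where N: "negligible N"
    "\<And>x e. \<lbrakk>x \<notin> N; 0 < e\<rbrakk> \<Longrightarrow> \<exists>d>0. \<forall>h. 0 < h \<and> h < d \<longrightarrow>
        norm (integral (cbox x (x + h *\<^sub>R One)) ?f /\<^sub>R h ^ DIM(real) - ?f x) < e"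
    using integrable_ccontinuous_explicit[of ?f] fint by blast
  have "\<not> E n \<subseteq> N"
  proof
    assume "E n \<subseteq> N"
    then have "negligible (E n)" using N(1) negligible_subset by blast
    then have "E n \<in> null_sets lebesgue" by (simp add: negligible_iff_null_sets)
    then have "E n \<in> null_sets lborel" by (subst null_sets_completion_iff[symmetric]) auto
    with nE show False by blast
  qed
  then obtain x where x: "x \<in> E n" "x \<notin> N" by blast
  obtain d where d: "d > 0" "\<And>h. 0 < h \<and> h < d \<Longrightarrow>
        norm (integral (cbox x (x + h *\<^sub>R One)) ?f /\<^sub>R h ^ DIM(real) - ?f x) < 1/4"
    using N(2)[OF x(2), of "1/4"] by auto
  define h where "h = d / 2"
  have h: "0 < h" "h < d" using d by (auto simp: h_def)
  define F where "F = E n \<inter> {x..x+h}"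
  have Fm[measurable]: "F \<in> sets borel" unfolding F_def by measurable
  have "integral {x..x+h} ?f = measure lebesgue F"
  proof -
    have "F \<in> lmeasurable" unfolding F_def by (rule bounded_set_imp_lmeasurable) auto
    then have "measure lebesgue F = integral UNIV (indicator F)" by (rule lmeasure_integral_UNIV)
    also have "\<dots> = integral UNIV (\<lambda>y. if y \<in> {x..x+h} then ?f y else 0)"
      by (rule arg_cong[where f="integral UNIV"]) (auto simp: F_def indicator_def fun_eq_iff)
    also have "\<dots> = integral {x..x+h} ?f" by (rule integral_restrict_UNIV)
    finally show ?thesis by simp
  qed
  moreover have "measure lebesgue F = measure lborel F" by simp
  ultimately have I: "integral {x..x+h} ?f = measure lborel F" by simp
  have n1: "norm (integral (cbox x (x + h *\<^sub>R One)) ?f /\<^sub>R h ^ DIM(real) - ?f x) < 1/4"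
    using d(2)[of h] h by blast
  have cb: "cbox x (x + h *\<^sub>R One) = {x..x+h}" by (simp add: cbox_interval)
  have fx: "?f x = 1" using x(1) by simp
  have "integral (cbox x (x + h *\<^sub>R One)) ?f /\<^sub>R h ^ DIM(real) = measure lborel F / h"
    unfolding cb I by (simp add: divide_inverse mult.commute)
  with n1 fx have "norm (measure lborel F / h - 1) < 1/4" by simp
  then have mF: "3 * h / 4 < measure lborel F" using h by (simp add: abs_if field_simps split: if_splits)
  have fin: "emeasure lborel {x..x+h} \<noteq> \<infinity>" using h by simp
  have "measure lborel ({x..x+h} - F) = measure lborel {x..x+h} - measure lborel F"
    by (rule measure_Diff[OF fin]) (auto simp: F_def)
  also have "\<dots> < h / 4" using mF h by simp
  finally have "measure lborel ({x..x+h} - F) < h / 4" .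
  moreover have "emeasure lborel ({x..x+h} - F) = ennreal (measure lborel ({x..x+h} - F))"
  proof (rule emeasure_eq_ennreal_measure)
    have "emeasure lborel ({x..x+h} - F) \<le> emeasure lborel {x..x+h}"
      by (rule emeasure_mono) auto
    then show "emeasure lborel ({x..x+h} - F) \<noteq> top" using fin by (auto simp: top_unique)
  qed
  ultimately have D: "emeasure lborel ({x..x+h} - F) \<le> ennreal (h/4)" by (auto intro!: ennreal_leI)
  have "\<forall>a\<in>F. c \<le> G a" unfolding F_def E_def c_def by auto
  then show ?thesis using c h Fm D by (intro exI[of _ c] exI[of _ x] exI[of _ h] exI[of _ F]) (auto simp: F_def)
qed



lemma nn_set_int:
  fixes f :: "real \<Rightarrow> real"
  assumes "set_integrable lborel A f" "\<And>x. x \<in> A \<Longrightarrow> 0 \<le> f x"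
  shows "(\<integral>\<^sup>+a. indicator A a * ennreal (f a) \<partial>lborel) = ennreal (LINT a:A|lborel. f a)"
proof -
  have "(\<integral>\<^sup>+a. indicator A a * ennreal (f a) \<partial>lborel) = (\<integral>\<^sup>+a. ennreal (indicator A a *\<^sub>R f a) \<partial>lborel)"
    by (rule nn_integral_cong) (simp add: indicator_mult_ennreal)
  also have "\<dots> = ennreal (LINT a:A|lborel. f a)"
    unfolding set_lebesgue_integral_def
    by (rule nn_integral_eq_integral) (use assms in \<open>auto simp: set_integrable_def indicator_def\<close>)
  finally show ?thesis .
qed

lemma kern_subset:
  assumes "kern f A C" "B \<subseteq> A" "0 \<le> C"
  shows "kern f B C"
  unfolding kern_def
proof
  fix t
  have "ennreal C * (\<integral>\<^sup>+a. indicator B a * ennreal (f (t - a)) \<partial>lborel) \<le> ennreal C * (\<integral>\<^sup>+a. indicator A a * ennreal (f (t - a)) \<partial>lborel)"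
    using assms(2) by (intro mult_left_mono nn_integral_mono) (auto simp: indicator_def)
  also have "\<dots> \<le> ennreal (f t)" using assms(1) unfolding kern_def by auto
  finally show "ennreal C * (\<integral>\<^sup>+a. indicator B a * ennreal (f (t - a)) \<partial>lborel) \<le> ennreal (f t)" .
qed

context orb
begin

lemma bb_int_compact: "set_integrable lborel {l..v} (\<lambda>a. bb (t - a))"
  unfolding set_integrable_def
  by (rule borel_integrable_compact) (auto intro!: continuous_on_compose2[OF bb_cont] continuous_intros)

lemma G_nz: "\<not> (AE a in lborel. indicator {0..} a * \<beta> a * exp (- \<mu> * a) \<le> 0)"
proof
  assume "AE a in lborel. indicator {0..} a * \<beta> a * exp (- \<mu> * a) \<le> 0"
  then have H: "AE a in lborel. indicator {0..} a *\<^sub>R (\<beta> a * exp (- \<mu> * a)) = 0"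
    using Mb by eventually_elim (auto simp: indicator_def mult_le_0_iff split: if_splits)
  have "(LINT a:{0..}|lborel. \<beta> a * exp (- \<mu> * a)) = 0"
    unfolding set_lebesgue_integral_def using integral_eq_zero_AE[OF H] .
  then show False using beta_norm by simp
qed

lemma kernF:
  obtains c p h F where "0 < c" "0 < h" "F \<in> sets borel" "F \<subseteq> {p..p+h}"
    "emeasure lborel ({p..p+h} - F) \<le> ennreal (h/4)" "kern bb F (kk * c)"
proof -
  have Gm: "(\<lambda>a. indicator {0..} a * \<beta> a * exp (- \<mu> * a)) \<in> borel_measurable borel"
    using beta_meas' by measurable
  obtain c p h F where cF: "0 < c" "0 < h" "F \<in> sets borel" "F \<subseteq> {p..p+h}"
    "\<forall>a\<in>F. c \<le> indicator {0..} a * \<beta> a * exp (- \<mu> * a)" "emeasure lborel ({p..p+h} - F) \<le> ennreal (h/4)"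
    using density_piece[OF Gm G_nz] by blast
  have F0: "F \<subseteq> {0..}"
  proof
    fix a assume "a \<in> F"
    with cF have "0 < indicator {0..} a * \<beta> a * exp (- \<mu> * a)" by force
    then show "a \<in> {0..}" by (cases "a \<in> {0..}") auto
  qed
  have cb: "\<And>a. a \<in> F \<Longrightarrow> c \<le> \<beta> a * exp (- \<mu> * a)" using cF(5) F0 by force
  have Fm[measurable]: "F \<in> sets borel" by fact
  have "kern bb F (kk * c)"
    unfolding kern_def
  proof
    fix t
    have iF: "set_integrable lborel F (\<lambda>a. bb (t - a))"
      by (rule set_integrable_subset[OF bb_int_compact _ cF(4)]) (use cF(3) in simp)
    have iF2: "set_integrable lborel F (\<lambda>a. \<beta> a * exp (- \<mu> * a) * bb (t - a))"
      by (rule set_integrable_subset[OF gbb_int _ F0]) simp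
    have "c * (LINT a:F|lborel. bb (t - a)) = (LINT a:F|lborel. c * bb (t - a))" by simp
    also have "\<dots> \<le> (LINT a:F|lborel. \<beta> a * exp (- \<mu> * a) * bb (t - a))"
      by (rule set_integral_mono[OF set_integrable_mult_right[OF iF] iF2])
         (use cb bb_nonneg in \<open>auto intro: mult_right_mono\<close>)
    also have "\<dots> \<le> (LINT a:{0..}|lborel. \<beta> a * exp (- \<mu> * a) * bb (t - a))"
      unfolding set_lebesgue_integral_def
    proof (rule integral_mono_AE)
      show "integrable lborel (\<lambda>x. indicator F x *\<^sub>R (\<beta> x * exp (- \<mu> * x) * bb (t - x)))"
        using iF2 by (simp add: set_integrable_def)
      show "integrable lborel (\<lambda>x. indicator {0..} x *\<^sub>R (\<beta> x * exp (- \<mu> * x) * bb (t - x)))"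
        using gbb_int by (simp add: set_integrable_def)
      show "AE x in lborel. indicator F x *\<^sub>R (\<beta> x * exp (- \<mu> * x) * bb (t - x)) \<le> indicator {0..} x *\<^sub>R (\<beta> x * exp (- \<mu> * x) * bb (t - x))"
        using Mb
      proof eventually_elim
        case (elim x)
        show ?case using F0 elim bb_nonneg[of "t - x"] by (auto simp: indicator_def)
      qed
    qed
    also have "\<dots> = X t" unfolding X_def by (rule X_eq[symmetric])
    finally have 1: "c * (LINT a:F|lborel. bb (t - a)) \<le> X t" .
    have "kk * c * (LINT a:F|lborel. bb (t - a)) \<le> kk * X t"
      using mult_left_mono[OF 1, of kk] kk_pos by (simp add: mult.assoc)
    also have "\<dots> \<le> bb t" by (rule bb_ge)
    finally have 2: "kk * c * (LINT a:F|lborel. bb (t - a)) \<le> bb t" .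
    have "(\<integral>\<^sup>+a. indicator F a * ennreal (bb (t - a)) \<partial>lborel) = ennreal (LINT a:F|lborel. bb (t - a))"
      by (rule nn_set_int[OF iF]) (rule bb_nonneg)
    moreover have "0 \<le> (LINT a:F|lborel. bb (t - a))"
      unfolding set_lebesgue_integral_def by (rule Bochner_Integration.integral_nonneg) (simp add: indicator_def bb_nonneg)
    ultimately show "ennreal (kk * c) * (\<integral>\<^sup>+a. indicator F a * ennreal (bb (t - a)) \<partial>lborel) \<le> ennreal (bb t)"
      using 2 kk_pos cF(1) by (simp add: ennreal_mult[symmetric] ennreal_leI)
  qed
  then show ?thesis using that cF by blast
qed

lemma kernJ:
  obtains j r K where "0 < r" "0 < K" "kern bb {j..j+r} K"
proof -
  obtain c p h F where cF: "0 < c" "0 < h" "F \<in> sets borel" "F \<subseteq> {p..p+h}"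
    "emeasure lborel ({p..p+h} - F) \<le> ennreal (h/4)" "kern bb F (kk * c)"
    by (rule kernF)
  define j where "j = 2*p + 3*h/4"
  define r where "r = (2*p + 5*h/4) - j"
  have r: "0 < r" using cF(2) by (simp add: r_def j_def)
  have jr: "j + r = 2*p + 5*h/4" by (simp add: r_def)
  have "kern bb {2*p + 3*h/4 .. 2*p + 5*h/4} (kk * c * (kk * c) * (h/4))"
  proof (rule kern_compose[OF bb_meas cF(3) cF(3)])
    show "{2*p + 3*h/4 .. 2*p + 5*h/4} \<in> sets borel" by simp
    show "0 \<le> kk * c" "0 \<le> h/4" using kk_pos cF by auto
    show "kern bb F (kk * c)" by (rule cF(6))
    show "ennreal (h / 4) \<le> emeasure lborel (F \<inter> {a. s - a \<in> F})" if "s \<in> {2*p + 3*h/4 .. 2*p + 5*h/4}" for s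
      by (rule set_cov[OF cF(2) cF(3) cF(4) cF(5) that])
  qed (use kk_pos cF(1) cF(6) in auto)
  then have "kern bb {j..j+r} (kk * c * (kk * c) * (h/4))" unfolding jr by (simp add: j_def)
  moreover have "0 < kk * c * (kk * c) * (h/4)" using kk_pos cF by simp
  ultimately show ?thesis using that r by blast
qed

lemma kern_iter:
  assumes r: "0 < r" and K: "0 < K" and kJ: "kern bb {j..j+r} K"
  shows "\<exists>w C. 0 < C \<and> kern bb {w..w + (r + real n * (r/2))} C"
proof (induction n)
  case 0
  then show ?case using K kJ by auto
next
  case (Suc n)
  then obtain w C where wC: "0 < C" "kern bb {w..w + (r + real n * (r/2))} C" by blast
  define l where "l = r + real n * (r/2)"
  have l: "r \<le> l" using r by (simp add: l_def)
  have k: "kern bb {w + j + r/4 .. w + j + l + 3*r/4} (C * K * (r/4))"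
  proof (rule kern_compose[OF bb_meas])
    show "{w..w+l} \<in> sets borel" "{j..j+r} \<in> sets borel" "{w + j + r/4 .. w + j + l + 3*r/4} \<in> sets borel" by auto
    show "0 \<le> C" "0 \<le> K" "0 \<le> r/4" using wC K r by auto
    show "kern bb {w..w+l} C" using wC by (simp add: l_def)
    show "kern bb {j..j+r} K" by (rule kJ)
    show "ennreal (r / 4) \<le> emeasure lborel ({w..w+l} \<inter> {a. s - a \<in> {j..j+r}})"
      if "s \<in> {w + j + r/4 .. w + j + l + 3*r/4}" for s
      by (rule interval_cov[OF r l that])
  qed
  have eq: "w + j + l + 3*r/4 = (w + j + r/4) + (r + real (Suc n) * (r/2))"
    by (simp add: l_def field_simps)
  have "0 < C * K * (r/4)" using wC K r by simp
  then show ?case using k unfolding eq by blast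
qed

lemma window:
  assumes L: "0 < L"
  obtains w C where "0 < C" "kern bb {w..w+L} C"
proof -
  obtain j r K where jrK: "0 < r" "0 < K" "kern bb {j..j+r} K" by (rule kernJ)
  obtain n where n: "L / (r/2) < real n" using reals_Archimedean2 by blast
  then have "L < real n * (r/2)" using jrK(1) by (simp add: field_simps)
  then have Ln: "L \<le> r + real n * (r/2)" using jrK(1) by simp
  obtain w C where wC: "0 < C" "kern bb {w..w + (r + real n * (r/2))} C"
    using kern_iter[OF jrK] by blast
  have "kern bb {w..w+L} C" by (rule kern_subset[OF wC(2)]) (use Ln wC(1) in auto)
  then show ?thesis using that wC(1) by blast
qed

end


context orb
begin

lemma gamma_window:
  assumes gm: "0 < \<gamma>m"
    and hyp: "\<forall>t. \<gamma>m \<le> (LINT a:{a. 0 \<le> a \<and> ereal a \<le> a_star \<mu> \<beta>}|lborel. u t a)"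
  obtains L where "0 < L" "\<forall>T. \<gamma>m / 2 \<le> (LINT a:{0..L}|lborel. bb (T - a))"
proof -
  define S where "S = {a. 0 \<le> a \<and> ereal a \<le> a_star \<mu> \<beta>}"
  define A where "A = \<alpha> * exp (-1)"
  have A: "0 < A" using alpha_pos by (simp add: A_def)
  define q where "q = \<gamma>m * \<mu> / (2 * A)"
  have q: "0 < q" using gm mu_pos A by (simp add: q_def)
  define L where "L = (\<bar>ln q\<bar> + 1) / \<mu>"
  have L: "0 < L" using mu_pos by (simp add: L_def add_nonneg_pos)
  have "exp (- \<mu> * L) = exp (- (\<bar>ln q\<bar> + 1))" using mu_pos by (simp add: L_def)
  also have "\<dots> \<le> exp (ln q)" by simp
  also have "\<dots> = q" using q by simp
  finally have eL: "exp (- \<mu> * L) \<le> q" .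
  have tail: "A * (exp (- \<mu> * L) / \<mu>) \<le> \<gamma>m / 2"
  proof -
    have "A * (exp (- \<mu> * L) / \<mu>) \<le> A * (q / \<mu>)"
      using eL A mu_pos by (intro mult_left_mono divide_right_mono) auto
    also have "\<dots> = \<gamma>m / 2" using A mu_pos by (simp add: q_def field_simps)
    finally show ?thesis .
  qed
  have main: "\<gamma>m / 2 \<le> (LINT a:{0..L}|lborel. bb (T - a))" for T
  proof -
    have s1: "(LINT a:S|lborel. u T a) \<le> (LINT a:{0..}|lborel. u T a)"
    proof (cases "set_integrable lborel S (u T)")
      case True
      show ?thesis unfolding set_lebesgue_integral_def
      proof (rule integral_mono_AE)
        show "integrable lborel (\<lambda>x. indicator S x *\<^sub>R u T x)" using True by (simp add: set_integrable_def)
        show "integrable lborel (\<lambda>x. indicator {0..} x *\<^sub>R u T x)" using uL1[of T] by (simp add: set_integrable_def)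
        show "AE x in lborel. indicator S x *\<^sub>R u T x \<le> indicator {0..} x *\<^sub>R u T x"
          using u_nonneg[of T] by eventually_elim (auto simp: indicator_def S_def)
      qed
    next
      case False
      then have "(LINT a:S|lborel. u T a) = 0"
        unfolding set_integrable_def set_lebesgue_integral_def by (rule not_integrable_integral_eq)
      moreover have "0 \<le> (LINT a:{0..}|lborel. u T a)"
        unfolding set_lebesgue_integral_def
        by (rule integral_nonneg_AE) (use u_nonneg[of T] in \<open>eventually_elim, auto simp: indicator_def\<close>)
      ultimately show ?thesis by simp
    qed
    have s2: "(LINT a:{0..}|lborel. u T a) = (LINT a:{0..}|lborel. exp (- \<mu> * a) * bb (T - a))"
      unfolding set_lebesgue_integral_def
    proof (rule integral_cong_AE)
      show "(\<lambda>x. indicator {0..} x *\<^sub>R u T x) \<in> borel_measurable lborel" using u_meas[of T] by simp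
      show "(\<lambda>x. indicator {0..} x *\<^sub>R (exp (- \<mu> * x) * bb (T - x))) \<in> borel_measurable lborel" by measurable
      show "AE x in lborel. indicator {0..} x *\<^sub>R u T x = indicator {0..} x *\<^sub>R (exp (- \<mu> * x) * bb (T - x))"
        using rep[of T] by eventually_elim (auto simp: indicator_def)
    qed
    have e0: "integrable lborel (\<lambda>a. indicator {0..} a *\<^sub>R exp (- \<mu> * a))"
      using exp_tail(1)[OF mu_pos, of 0] by (simp add: set_integrable_def)
    have eL': "integrable lborel (\<lambda>a. indicator {L..} a *\<^sub>R exp (- \<mu> * a))"
      using exp_tail(1)[OF mu_pos, of L] by (simp add: set_integrable_def)
    have bL: "integrable lborel (\<lambda>a. indicator {0..L} a *\<^sub>R bb (T - a))"
      using bb_int_compact[of 0 L T] by (simp add: set_integrable_def)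
    have iR: "integrable lborel (\<lambda>a. indicator {0..L} a *\<^sub>R bb (T - a) + A * (indicator {L..} a *\<^sub>R exp (- \<mu> * a)))"
      using bL eL' by auto
    have iLft: "integrable lborel (\<lambda>a. indicator {0..} a *\<^sub>R (exp (- \<mu> * a) * bb (T - a)))"
    proof (rule Bochner_Integration.integrable_bound)
      show "integrable lborel (\<lambda>a. A * (indicator {0..} a *\<^sub>R exp (- \<mu> * a)))" using e0 by auto
      show "(\<lambda>a. indicator {0..} a *\<^sub>R (exp (- \<mu> * a) * bb (T - a))) \<in> borel_measurable lborel" by measurable
      show "AE x in lborel. norm (indicator {0..} x *\<^sub>R (exp (- \<mu> * x) * bb (T - x))) \<le> norm (A * (indicator {0..} x *\<^sub>R exp (- \<mu> * x)))"
      proof (rule AE_I2)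
        fix x
        have "exp (- \<mu> * x) * bb (T - x) \<le> exp (- \<mu> * x) * A"
          using bb_le[of "T - x"] by (intro mult_left_mono) (auto simp: A_def)
        then show "norm (indicator {0..} x *\<^sub>R (exp (- \<mu> * x) * bb (T - x))) \<le> norm (A * (indicator {0..} x *\<^sub>R exp (- \<mu> * x)))"
          using bb_nonneg[of "T - x"] A by (auto simp: indicator_def abs_mult mult.commute)
      qed
    qed
    have s3: "(LINT a:{0..}|lborel. exp (- \<mu> * a) * bb (T - a))
        \<le> integral\<^sup>L lborel (\<lambda>a. indicator {0..L} a *\<^sub>R bb (T - a) + A * (indicator {L..} a *\<^sub>R exp (- \<mu> * a)))"
      unfolding set_lebesgue_integral_def
    proof (rule integral_mono[OF iLft iR])
      fix a
      show "indicator {0..} a *\<^sub>R (exp (- \<mu> * a) * bb (T - a)) \<le> indicator {0..L} a *\<^sub>R bb (T - a) + A * (indicator {L..} a *\<^sub>R exp (- \<mu> * a))"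
      proof (cases "a < 0")
        case True then show ?thesis using A by (simp add: indicator_def)
      next
        case False
        show ?thesis
        proof (cases "a \<le> L")
          case True
          have "exp (- \<mu> * a) * bb (T - a) \<le> 1 * bb (T - a)"
            using False mu_pos bb_nonneg[of "T - a"] by (intro mult_right_mono) auto
          moreover have "0 \<le> A * (indicator {L..} a *\<^sub>R exp (- \<mu> * a))" using A by simp
          ultimately show ?thesis using False True by (simp add: indicator_def)
        next
          case F2: False
          have "exp (- \<mu> * a) * bb (T - a) \<le> exp (- \<mu> * a) * A"
            using bb_le[of "T - a"] by (intro mult_left_mono) (auto simp: A_def)
          then show ?thesis using False F2 by (simp add: indicator_def mult.commute)
        qed
      qed
    qed
    also have "\<dots> = (LINT a:{0..L}|lborel. bb (T - a)) + A * (exp (- \<mu> * L) / \<mu>)"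
      using bL eL' exp_tail(2)[OF mu_pos, of L] by (simp add: set_lebesgue_integral_def)
    finally have s3': "(LINT a:{0..}|lborel. exp (- \<mu> * a) * bb (T - a)) \<le> (LINT a:{0..L}|lborel. bb (T - a)) + \<gamma>m / 2"
      using tail by linarith
    have "\<gamma>m \<le> (LINT a:S|lborel. u T a)" using hyp unfolding S_def by blast
    then show ?thesis using s1 s2 s3' by linarith
  qed
  show ?thesis using that L main by blast
qed

lemma part2:
  "\<forall>\<gamma>m \<gamma>p :: real. 0 < \<gamma>m \<and> \<gamma>m < \<gamma>p \<and>
            (\<forall>t. \<gamma>m \<le> (LINT a:{a. 0 \<le> a \<and> ereal a \<le> a_star \<mu> \<beta>}|lborel. u t a) \<and>
                 (LINT a:{a. 0 \<le> a \<and> ereal a \<le> a_star \<mu> \<beta>}|lborel. u t a) \<le> \<gamma>p)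
          \<longrightarrow> (\<exists>\<delta>m \<delta>p :: real. 0 < \<delta>m \<and> \<delta>m \<le> \<delta>p \<and>
                 (\<forall>t. \<delta>m \<le> (LINT a:{0..}|lborel. \<beta> a * u t a) \<and>
                      (LINT a:{0..}|lborel. \<beta> a * u t a) \<le> \<delta>p))"
proof (intro allI impI)
  fix \<gamma>m \<gamma>p :: real
  assume H: "0 < \<gamma>m \<and> \<gamma>m < \<gamma>p \<and>
            (\<forall>t. \<gamma>m \<le> (LINT a:{a. 0 \<le> a \<and> ereal a \<le> a_star \<mu> \<beta>}|lborel. u t a) \<and>
                 (LINT a:{a. 0 \<le> a \<and> ereal a \<le> a_star \<mu> \<beta>}|lborel. u t a) \<le> \<gamma>p)"
  then have gm: "0 < \<gamma>m" and hyp: "\<forall>t. \<gamma>m \<le> (LINT a:{a. 0 \<le> a \<and> ereal a \<le> a_star \<mu> \<beta>}|lborel. u t a)"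
    by auto
  obtain L where L: "0 < L" "\<forall>T. \<gamma>m / 2 \<le> (LINT a:{0..L}|lborel. bb (T - a))"
    using gamma_window[OF gm hyp] by blast
  obtain w C where wC: "0 < C" "kern bb {w..w+L} C" using window[OF L(1)] by blast
  define \<delta>m where "\<delta>m = C * (\<gamma>m / 2) / \<alpha>"
  have dm: "0 < \<delta>m" using wC gm alpha_pos by (simp add: \<delta>m_def)
  have low: "\<delta>m \<le> X t" for t
  proof -
    have k: "ennreal C * (\<integral>\<^sup>+s. indicator {w..w+L} s * ennreal (bb (t - s)) \<partial>lborel) \<le> ennreal (bb t)"
      using wC(2) unfolding kern_def by blast
    have "(\<integral>\<^sup>+s. indicator {w..w+L} s * ennreal (bb (t - s)) \<partial>lborel)
        = ennreal \<bar>1\<bar> * (\<integral>\<^sup>+a. indicator {w..w+L} (w + 1 * a) * ennreal (bb (t - (w + 1 * a))) \<partial>lborel)"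
      by (rule nn_integral_real_affine) auto
    also have "\<dots> = (\<integral>\<^sup>+a. indicator {0..L} a * ennreal (bb ((t - w) - a)) \<partial>lborel)"
      by (auto intro!: nn_integral_cong simp: indicator_def algebra_simps)
    also have "\<dots> = ennreal (LINT a:{0..L}|lborel. bb ((t - w) - a))"
      by (rule nn_set_int[OF bb_int_compact]) (rule bb_nonneg)
    finally have eq: "(\<integral>\<^sup>+s. indicator {w..w+L} s * ennreal (bb (t - s)) \<partial>lborel) = ennreal (LINT a:{0..L}|lborel. bb ((t - w) - a))" .
    have g2: "\<gamma>m / 2 \<le> (LINT a:{0..L}|lborel. bb ((t - w) - a))" using L(2) by blast
    have "ennreal (C * (LINT a:{0..L}|lborel. bb ((t - w) - a))) \<le> ennreal (bb t)"
      using k unfolding eq using wC(1) gm g2 by (simp add: ennreal_mult)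
    then have "C * (LINT a:{0..L}|lborel. bb ((t - w) - a)) \<le> bb t"
      using bb_nonneg[of t] by (simp add: ennreal_le_iff)
    moreover have "C * (\<gamma>m / 2) \<le> C * (LINT a:{0..L}|lborel. bb ((t - w) - a))"
      using g2 wC(1) by (intro mult_left_mono) auto
    ultimately have "C * (\<gamma>m / 2) \<le> \<alpha> * X t" using bb_le_X[of t] by linarith
    then show ?thesis using alpha_pos unfolding \<delta>m_def by (simp add: field_simps)
  qed
  define \<delta>p where "\<delta>p = max \<delta>m (\<alpha> * exp (-1))"
  show "\<exists>\<delta>m \<delta>p :: real. 0 < \<delta>m \<and> \<delta>m \<le> \<delta>p \<and>
                 (\<forall>t. \<delta>m \<le> (LINT a:{0..}|lborel. \<beta> a * u t a) \<and>
                      (LINT a:{0..}|lborel. \<beta> a * u t a) \<le> \<delta>p)"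
  proof (intro exI conjI allI)
    show "0 < \<delta>m" by (rule dm)
    show "\<delta>m \<le> \<delta>p" by (simp add: \<delta>p_def)
    fix t
    show "\<delta>m \<le> (LINT a:{0..}|lborel. \<beta> a * u t a)" using low[of t] by (simp add: X_def)
    show "(LINT a:{0..}|lborel. \<beta> a * u t a) \<le> \<delta>p" using X_le[of t] by (simp add: X_def \<delta>p_def)
  qed
qed

end

theorem theorem5p4:
  fixes \<mu> \<alpha> :: real and \<beta> :: "real \<Rightarrow> real" and u :: "real \<Rightarrow> real \<Rightarrow> real"
  assumes mu_pos: "0 < \<mu>" and alpha_pos: "0 < \<alpha>"
    and beta_meas: "set_borel_measurable lborel {0..} \<beta>"
    and beta_Linf: "\<exists>M. AE a in lborel. 0 \<le> a \<longrightarrow> 0 \<le> \<beta> a \<and> \<beta> a \<le> M"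
    and beta_norm: "(LINT a:{0..}|lborel. \<beta> a * exp (- \<mu> * a)) = 1"
    and orbit: "complete_orbit \<mu> \<alpha> \<beta> u"
  shows "(\<exists>b :: real \<Rightarrow> real.
            (\<forall>t. AE a in lborel. 0 \<le> a \<longrightarrow> u t a = exp (- \<mu> * a) * b (t - a)) \<and>
            (\<forall>t. set_integrable lborel {0..} (\<lambda>a. \<beta> a * exp (- \<mu> * a) * b (t - a)) \<and>
                 b t = \<alpha> * ricker (LINT a:{0..}|lborel. \<beta> a * exp (- \<mu> * a) * b (t - a))))
       \<and> (\<forall>\<gamma>m \<gamma>p :: real. 0 < \<gamma>m \<and> \<gamma>m < \<gamma>p \<and>
            (\<forall>t. \<gamma>m \<le> (LINT a:{a. 0 \<le> a \<and> ereal a \<le> a_star \<mu> \<beta>}|lborel. u t a) \<and>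
                 (LINT a:{a. 0 \<le> a \<and> ereal a \<le> a_star \<mu> \<beta>}|lborel. u t a) \<le> \<gamma>p)
          \<longrightarrow> (\<exists>\<delta>m \<delta>p :: real. 0 < \<delta>m \<and> \<delta>m \<le> \<delta>p \<and>
                 (\<forall>t. \<delta>m \<le> (LINT a:{0..}|lborel. \<beta> a * u t a) \<and>
                      (LINT a:{0..}|lborel. \<beta> a * u t a) \<le> \<delta>p)))"
proof -
  interpret orb \<mu> \<alpha> \<beta> u
    by unfold_locales (fact assms)+
  show ?thesis
  proof
    show "\<exists>b :: real \<Rightarrow> real.
            (\<forall>t. AE a in lborel. 0 \<le> a \<longrightarrow> u t a = exp (- \<mu> * a) * b (t - a)) \<and>
            (\<forall>t. set_integrable lborel {0..} (\<lambda>a. \<beta> a * exp (- \<mu> * a) * b (t - a)) \<and>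
                 b t = \<alpha> * ricker (LINT a:{0..}|lborel. \<beta> a * exp (- \<mu> * a) * b (t - a)))"
      using part1 by blast
  qed (rule part2)
qed


end
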